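(* If $a,b$ are integers with $a>1$ and $b>1$, then \[\overline{p}(a)\,\overline{p}(b)>\overline{p}(a+b).\]
   Context: An overpartition of a nonnegative integer $n$ is a partition of $n$ in which the first occurrence of each distinct part may be overlined. $\overline{p}(n)$ denotes the number of overpartitions of $n$. *)

theory Defs
  imports Main "HOL-Library.Multiset"
begin

text \<open>An overpartition of n: a partition M of n together with the set S of distinct
part sizes whose first occurrence is overlined (any subset of the distinct parts).\<close>

definition overpartitions :: "nat \<Rightarrow> (nat multiset \<times> nat set) set" where
  "overpartitions n = {(M, S). (\<forall>x\<in>#M. 0 < x) \<and> sum_mset M = n \<and> S \<subseteq> set_mset M}"

definition overpartition_count :: "nat \<Rightarrow> nat" where
  "overpartition_count n = card (overpartitions n)"

end

theory Submission
  imports Defs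
begin

lemma size_le_sum_pos: "(\<forall>x\<in>#M. 0 < (x::nat)) \<Longrightarrow> size M \<le> sum_mset M"
  by (induction M) auto

lemma elem_le_sum: "(x::nat) \<in># M \<Longrightarrow> x \<le> sum_mset M"
proof -
  assume "x \<in># M"
  then obtain N where "M = add_mset x N" by (rule mset_add)
  then show ?thesis by simp
qed

lemma finite_overpartitions: "finite (overpartitions n)"
proof -
  have "overpartitions n \<subseteq> (\<Union>k\<in>{..n}. multisets_of_size {1..n} k) \<times> Pow {1..n}"
  proof
    fix p assume p: "p \<in> overpartitions n"
    obtain M S where pMS: "p = (M,S)" by (cases p)
    have pos: "\<forall>x\<in>#M. 0 < x" and sM: "sum_mset M = n" and SM: "S \<subseteq> set_mset M"
      using p pMS by (auto simp: overpartitions_def)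
    have "x \<in> {1..n}" if "x \<in># M" for x
      using pos sM elem_le_sum[OF that] that by auto
    then have "set_mset M \<subseteq> {1..n}" by blast
    moreover have "size M \<le> n" using size_le_sum_pos[OF pos] sM by simp
    ultimately show "p \<in> (\<Union>k\<in>{..n}. multisets_of_size {1..n} k) \<times> Pow {1..n}"
      using pMS SM by (auto simp: multisets_of_size_def)
  qed
  moreover have "finite ((\<Union>k\<in>{..n}. multisets_of_size {1..n} k) \<times> Pow {1..n})"
    by (intro finite_cartesian_product finite_UN_I) auto
  ultimately show ?thesis by (rule finite_subset)
qed

definition Hs :: "nat \<Rightarrow> (nat multiset \<times> nat set) set" where
  "Hs n = {p \<in> overpartitions n. 1 \<notin># fst p}"

lemma finite_Hs: "finite (Hs n)"
  unfolding Hs_def using finite_overpartitions by auto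

lemma overpartitions_0: "overpartitions 0 = {({#}, {})}"
proof -
  have "M = {#}" if "\<forall>x\<in>#M. 0 < (x::nat)" "sum_mset M = 0" for M
    using that by (cases M) auto
  then show ?thesis by (fastforce simp: overpartitions_def)
qed

definition Ws :: "nat \<Rightarrow> (nat multiset \<times> nat set) set" where
  "Ws n = {p \<in> overpartitions n. 1 \<in># fst p}"

lemma finite_Ws: "finite (Ws n)"
  unfolding Ws_def using finite_overpartitions by auto

lemma card_O_split: "card (overpartitions n) = card (Hs n) + card (Ws n)"
proof -
  have "overpartitions n = Hs n \<union> Ws n" by (auto simp: Hs_def Ws_def)
  moreover have "Hs n \<inter> Ws n = {}" by (auto simp: Hs_def Ws_def)
  ultimately show ?thesis using finite_Hs finite_Ws card_Un_disjoint by metis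
qed

definition addone :: "(nat multiset \<times> nat set) \<times> bool \<Rightarrow> nat multiset \<times> nat set" where
  "addone x = (case x of ((M,S),t) \<Rightarrow> (add_mset 1 M, if t then insert 1 S else S))"

lemma addone_bij:
  assumes n: "n \<ge> 1"
  shows "bij_betw addone (overpartitions (n-1) \<times> {False} \<union> Hs (n-1) \<times> {True}) (Ws n)"
proof (rule bij_betwI')
  fix x y assume x: "x \<in> overpartitions (n-1) \<times> {False} \<union> Hs (n-1) \<times> {True}"
    and y: "y \<in> overpartitions (n-1) \<times> {False} \<union> Hs (n-1) \<times> {True}"
  obtain M S t where xx: "x = ((M,S),t)" by (metis prod.exhaust)
  obtain M' S' t' where yy: "y = ((M',S'),t')" by (metis prod.exhaust)
  have SM: "S \<subseteq> set_mset M" and SM': "S' \<subseteq> set_mset M'"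
    using x y xx yy by (auto simp: overpartitions_def Hs_def)
  have tM: "t \<Longrightarrow> 1 \<notin># M" and tM': "t' \<Longrightarrow> 1 \<notin># M'"
    using x y xx yy by (auto simp: Hs_def)
  show "(addone x = addone y) = (x = y)"
  proof
    assume eq: "addone x = addone y"
    then have MM: "M = M'" using xx yy by (simp add: addone_def)
    have SS: "(if t then insert 1 S else S) = (if t' then insert 1 S' else S')"
      using eq xx yy by (simp add: addone_def)
    show "x = y"
    proof (cases t; cases t')
      assume "t" "t'"
      then have "1 \<notin> S" "1 \<notin> S'" using tM tM' SM SM' MM by auto
      moreover have "insert 1 S = insert 1 S'" using SS \<open>t\<close> \<open>t'\<close> by simp
      ultimately have "S = S'" by (metis Diff_insert_absorb)
      then show ?thesis using \<open>t\<close> \<open>t'\<close> xx yy MM by simp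
    next
      assume "t" "\<not>t'"
      then have "1 \<in> S'" using SS by auto
      then show ?thesis using SM' MM tM \<open>t\<close> by auto
    next
      assume "\<not>t" "t'"
      then have "1 \<in> S" using SS by auto
      then show ?thesis using SM MM tM' \<open>t'\<close> by auto
    next
      assume "\<not>t" "\<not>t'"
      then show ?thesis using SS xx yy MM by simp
    qed
  qed simp
next
  fix x assume x: "x \<in> overpartitions (n-1) \<times> {False} \<union> Hs (n-1) \<times> {True}"
  obtain M S t where xx: "x = ((M,S),t)" by (metis prod.exhaust)
  have "(M,S) \<in> overpartitions (n-1)" using x xx by (auto simp: Hs_def)
  then show "addone x \<in> Ws n"
    using xx n by (auto simp: overpartitions_def Ws_def addone_def)
next
  fix y assume y: "y \<in> Ws n"
  obtain M S where yy: "y = (M,S)" by (metis prod.exhaust)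
  have pos: "\<forall>x\<in>#M. 0 < x" and sM: "sum_mset M = n" and SM: "S \<subseteq> set_mset M"
    and one: "1 \<in># M"
    using y yy by (auto simp: overpartitions_def Ws_def)
  define M' where "M' = M - {#1#}"
  have MM: "M = add_mset 1 M'" using one M'_def by simp
  have pos': "\<forall>x\<in>#M'. 0 < x" using pos MM by simp
  have sM': "sum_mset M' = n - 1" using sM MM by simp
  show "\<exists>x\<in>overpartitions (n-1) \<times> {False} \<union> Hs (n-1) \<times> {True}. y = addone x"
  proof (cases "1 \<in> S \<and> 1 \<notin># M'")
    case True
    have "((M', S - {1}), True) \<in> Hs (n-1) \<times> {True}"
      using True pos' sM' SM MM by (auto simp: Hs_def overpartitions_def)
    moreover have "y = addone ((M', S - {1}), True)"
      using True yy MM by (auto simp: addone_def)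
    ultimately show ?thesis by blast
  next
    case False
    have "S \<subseteq> set_mset M'" using False SM MM by auto
    then have "((M', S), False) \<in> overpartitions (n-1) \<times> {False}"
      using pos' sM' by (auto simp: overpartitions_def)
    moreover have "y = addone ((M', S), False)"
      using yy MM by (auto simp: addone_def)
    ultimately show ?thesis by blast
  qed
qed

lemma card_Ws:
  assumes "n \<ge> 1"
  shows "card (Ws n) = card (overpartitions (n-1)) + card (Hs (n-1))"
proof -
  have "card (Ws n) = card (overpartitions (n-1) \<times> {False} \<union> Hs (n-1) \<times> {True})"
    using bij_betw_same_card[OF addone_bij[OF assms]] by simp
  also have "\<dots> = card (overpartitions (n-1) \<times> {False}) + card (Hs (n-1) \<times> {True})"
    by (rule card_Un_disjoint) (auto simp: finite_overpartitions finite_Hs)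
  also have "\<dots> = card (overpartitions (n-1)) + card (Hs (n-1))"
    by (simp add: card_cartesian_product)
  finally show ?thesis .
qed

lemma lemmaA:
  assumes "n \<ge> 1"
  shows "overpartition_count n = overpartition_count (n-1) + card (Hs n) + card (Hs (n-1))"
  using card_O_split[of n] card_Ws[OF assms] by (simp add: overpartition_count_def)

lemma O_mem: "(L,S) \<in> overpartitions n \<longleftrightarrow> (\<forall>x\<in>#L. 0<x) \<and> sum_mset L = n \<and> S \<subseteq> set_mset L"
  by (simp add: overpartitions_def)

lemma Hs_mem: "(L,S) \<in> Hs n \<longleftrightarrow> (\<forall>x\<in>#L. 0<x) \<and> sum_mset L = n \<and> S \<subseteq> set_mset L \<and> 1 \<notin># L"
  by (auto simp: overpartitions_def Hs_def)

definition dec :: "(nat multiset \<times> nat set) \<times> ((nat multiset \<times> nat set) \<times> bool) \<Rightarrow> (nat multiset \<times> nat set) \<times> bool" where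
  "dec x = (case x of ((B,SB),((K,SK),t)) \<Rightarrow>
     (if count B 1 = 0 then ((B + K, SB \<union> SK), t)
      else if \<not> t then
        ((filter_mset (\<lambda>y. y \<noteq> 1) B + (K - {#Min (set_mset K)#}) +
            {#(if 1 \<in> SB then Min (set_mset K) + count B 1 - 1 else Min (set_mset K) + count B 1)#},
          (SB - {1}) \<union> (SK - {Min (set_mset K)}) \<union>
            (if Min (set_mset K) \<in> SK then {(if 1 \<in> SB then Min (set_mset K) + count B 1 - 1 else Min (set_mset K) + count B 1)} else {})),
         1 \<in> SB)
      else ((filter_mset (\<lambda>y. y \<noteq> 1) B + K + {#count B 1 + 1#},
             (SB - {1}) \<union> SK \<union> (if 1 \<in> SB then {count B 1 + 1} else {})), False)))"

definition Dom :: "nat \<Rightarrow> nat \<Rightarrow> ((nat multiset \<times> nat set) \<times> ((nat multiset \<times> nat set) \<times> bool)) set" where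
  "Dom m b = overpartitions b \<times> (Hs m \<times> {False} \<union> Hs (m-1) \<times> {True})"

definition Tgt :: "nat \<Rightarrow> nat \<Rightarrow> ((nat multiset \<times> nat set) \<times> bool) set" where
  "Tgt m b = Hs (m+b) \<times> {False} \<union> Hs (m+b-1) \<times> {True}"

lemma nat_ge2: "\<forall>x\<in>#L. 0 < (x::nat) \<Longrightarrow> 1 \<notin># L \<Longrightarrow> x \<in># L \<Longrightarrow> 2 \<le> x"
  by (metis One_nat_def Suc_1 Suc_leI le_neq_implies_less less_one not_less)

lemma preimage_exists:
  assumes m: "m \<ge> 1" and L: "(L,S) \<in> Hs n" and nt: "n = (if t then m+b-1 else m+b)"
  shows "\<exists>x \<in> Dom m b. dec x = ((L,S),t)"
proof -
  have Lpos: "\<forall>x\<in>#L. 0<x" and sL: "sum_mset L = n" and SL: "S \<subseteq> set_mset L" and L1: "1 \<notin># L"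
    using L by (auto simp: Hs_mem)
  have L2: "\<And>x. x \<in># L \<Longrightarrow> 2 \<le> x" using nat_ge2[OF Lpos L1] .
  have nb: "b \<le> n" using nt m by auto
  obtain W where WL: "W \<subseteq># L" and Wb: "sum_mset W \<le> b" and Wmax0:
    "\<forall>W'. W' \<subseteq># L \<and> sum_mset W' \<le> b \<longrightarrow> sum_mset W' \<le> sum_mset W"
    using ex_has_greatest_nat[of "\<lambda>W. W \<subseteq># L \<and> sum_mset W \<le> b" "{#}" sum_mset "Suc b"]
    by auto
  have Wmax: "\<And>W'. W' \<subseteq># L \<Longrightarrow> sum_mset W' \<le> b \<Longrightarrow> sum_mset W' \<le> sum_mset W"
    using Wmax0 by blast
  have W2: "\<And>x. x \<in># W \<Longrightarrow> 2 \<le> x" using WL L2 by (meson mset_subset_eqD)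
  have W1: "count W 1 = 0" using W2 by (metis count_eq_zero_iff numeral_le_one_iff semiring_norm(69))
  have Wpos: "\<forall>x\<in>#W. 0<x" using W2 by fastforce
  have LW: "L = W + (L - W)" using WL by (simp add: subset_mset.add_diff_inverse)
  have sLW: "sum_mset (L - W) = n - sum_mset W"
    using LW sL by (metis add_diff_cancel_left' sum_mset.union)
  define r where "r = b - sum_mset W"
  show ?thesis
  proof (cases "r = 0")
    case True
    then have sW: "sum_mset W = b" using Wb r_def by simp
    let ?x = "((W, S \<inter> set_mset W), ((L - W, S \<inter> set_mset (L - W)), t))"
    have "?x \<in> Dom m b"
    proof -
      have "(W, S \<inter> set_mset W) \<in> overpartitions b" using Wpos sW by (auto simp: O_mem)
      moreover have "(L - W, S \<inter> set_mset (L - W)) \<in> Hs (if t then m - 1 else m)"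
        using Lpos L1 sLW sW nt m by (auto simp: Hs_mem dest: in_diffD)
      ultimately show ?thesis by (cases t) (auto simp: Dom_def)
    qed
    moreover have "dec ?x = ((L,S),t)"
    proof -
      have "S \<inter> set_mset W \<union> S \<inter> set_mset (L - W) = S"
        using SL LW by (metis Int_Un_distrib Int_absorb2 set_mset_union)
      then show ?thesis using W1 LW by (simp add: dec_def)
    qed
    ultimately show ?thesis by blast
  next
    case False
    then have rpos: "r \<ge> 1" by simp
    have sWr: "sum_mset W + r = b" using Wb r_def by simp
    have LWne: "L - W \<noteq> {#}"
    proof
      assume "L - W = {#}"
      then have "sum_mset W = n" using LW sL by simp
      then show False using nb Wb rpos r_def by simp
    qed
    define p where "p = Min (set_mset (L - W))"
    have pin: "p \<in># L - W" using LWne p_def by simp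
    have pmin: "\<And>x. x \<in># L - W \<Longrightarrow> p \<le> x" using p_def by simp
    have pL: "p \<in># L" using pin by (rule in_diffD)
    have p2: "p \<ge> 2" using L2 pL by blast
    define rest where "rest = L - W - {#p#}"
    have LWr: "L - W = add_mset p rest" unfolding rest_def by (rule insert_DiffM[OF pin, symmetric])
    have Lrest: "L = W + add_mset p rest" using LW LWr by simp
    have restge: "\<And>x. x \<in># rest \<Longrightarrow> p \<le> x" using pmin LWr by simp
    have rest2: "\<And>x. x \<in># rest \<Longrightarrow> 2 \<le> x" using restge p2 by fastforce
    have rest1: "1 \<notin># rest" using rest2 by fastforce
    have restpos: "\<forall>x\<in>#rest. 0<x" using rest2 by fastforce
    have sumL: "sum_mset W + p + sum_mset rest = n" using Lrest sL by simp
    have pr: "r < p"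
    proof (rule ccontr)
      assume "\<not> r < p"
      then have "sum_mset (add_mset p W) \<le> b" using sWr by simp
      moreover have "add_mset p W \<subseteq># L"
        using Lrest by simp
      ultimately have "sum_mset (add_mset p W) \<le> sum_mset W" using Wmax by blast
      then show False using p2 by simp
    qed
    have Sdecomp: "S \<subseteq> set_mset W \<union> set_mset rest \<union> {p}" using SL Lrest by auto
    define B where "B = W + replicate_mset r 1"
    have cB: "count B 1 = r" using W1 B_def by simp
    have fB: "filter_mset (\<lambda>y. y \<noteq> 1) B = W"
    proof -
      have "filter_mset (\<lambda>y. y \<noteq> 1) W = filter_mset (\<lambda>y. True) W"
        by (rule filter_mset_cong0) (use W2 in fastforce)
      then show ?thesis by (simp add: B_def)
    qed
    have sB: "sum_mset B = b" using sWr B_def by (simp add: sum_mset_replicate_mset)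
    have Bpos: "\<forall>x\<in>#B. 0<x" using Wpos B_def by auto
    have setB: "set_mset B = set_mset W \<union> {1}" using rpos B_def by auto
    have W1': "1 \<notin># W" using W1 by (simp add: not_in_iff)
    show ?thesis
    proof (cases t)
      case True
      define c where "c = p - r + 1"
      have c2: "c \<ge> 2" using pr c_def by simp
      have cp: "c \<le> p" using rpos c_def pr by simp
      have cr: "c + r - 1 = p" using c_def pr by simp
      define K where "K = add_mset c rest"
      define SK where "SK = S \<inter> set_mset rest \<union> (if p \<in> S then {c} else {})"
      define SB where "SB = S \<inter> set_mset W \<union> {1}"
      have MinK: "Min (set_mset K) = c"
        by (rule Min_eqI) (use restge cp K_def in fastforce)+
      have sK: "sum_mset K = m" using sumL nt True c_def sWr pr m K_def by simp
      have inD: "((B,SB),((K,SK),False)) \<in> Dom m b"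
      proof -
        have "(B,SB) \<in> overpartitions b" using Bpos sB setB SB_def by (auto simp: O_mem)
        moreover have "(K,SK) \<in> Hs m"
          using restpos rest1 c2 sK K_def SK_def by (auto simp: Hs_mem)
        ultimately show ?thesis by (auto simp: Dom_def)
      qed
      have "dec ((B,SB),((K,SK),False)) = ((L,S),t)"
      proof -
        have M: "W + rest + {#p#} = L" using Lrest by simp
        have Sx: "(SB - {1}) \<union> (SK - {c}) \<union> (if c \<in> SK then {p} else {}) = S"
        proof (cases "c = p")
          case True
          then show ?thesis using Sdecomp W1' SB_def SK_def by auto
        next
          case False
          then have "c \<notin># rest" using restge cp by fastforce
          then show ?thesis using Sdecomp W1' SB_def SK_def False by auto
        qed
        show ?thesis using cB fB MinK rpos cr M \<open>t\<close> K_def SB_def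
          by (simp add: dec_def) (use Sx in \<open>auto split: if_splits\<close>)
      qed
      then show ?thesis using inD by blast
    next
      case False
      show ?thesis
      proof (cases "p - r = 1")
        case True
        define SB where "SB = S \<inter> set_mset W \<union> (if p \<in> S then {1} else {})"
        define SK where "SK = S \<inter> set_mset rest"
        have sK: "sum_mset rest = m - 1" using sumL nt \<open>\<not>t\<close> True sWr pr m by simp
        have inD: "((B,SB),((rest,SK),True)) \<in> Dom m b"
        proof -
          have "(B,SB) \<in> overpartitions b" using Bpos sB setB SB_def by (auto simp: O_mem)
          moreover have "(rest,SK) \<in> Hs (m-1)"
            using restpos rest1 sK SK_def by (auto simp: Hs_mem)
          ultimately show ?thesis by (auto simp: Dom_def)
        qed
        have "dec ((B,SB),((rest,SK),True)) = ((L,S),t)"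
        proof -
          have M: "W + rest + {#r + 1#} = L" using Lrest True pr by simp
          have pr1: "p = r + 1" using True pr by simp
          have Sx: "(SB - {1}) \<union> SK \<union> (if 1 \<in> SB then {r + 1} else {}) = S"
            using Sdecomp W1' SB_def SK_def pr1 by auto
          show ?thesis using cB fB rpos M \<open>\<not>t\<close>
            by (simp add: dec_def) (use Sx in \<open>auto split: if_splits\<close>)
        qed
        then show ?thesis using inD by blast
      next
        case False
        define c where "c = p - r"
        have c2: "c \<ge> 2" using pr c_def False by simp
        have cp: "c < p" using rpos c_def pr by simp
        have cr: "c + r = p" using c_def pr by simp
        define K where "K = add_mset c rest"
        define SK where "SK = S \<inter> set_mset rest \<union> (if p \<in> S then {c} else {})"
        define SB where "SB = S \<inter> set_mset W"
        have MinK: "Min (set_mset K) = c"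
          by (rule Min_eqI) (use restge cp K_def in fastforce)+
        have sK: "sum_mset K = m" using sumL nt \<open>\<not>t\<close> c_def sWr pr m K_def by simp
        have inD: "((B,SB),((K,SK),False)) \<in> Dom m b"
        proof -
          have "(B,SB) \<in> overpartitions b" using Bpos sB setB SB_def by (auto simp: O_mem)
          moreover have "(K,SK) \<in> Hs m"
            using restpos rest1 c2 sK K_def SK_def by (auto simp: Hs_mem)
          ultimately show ?thesis by (auto simp: Dom_def)
        qed
        have "dec ((B,SB),((K,SK),False)) = ((L,S),t)"
        proof -
          have M: "W + rest + {#p#} = L" using Lrest by simp
          have cnot: "c \<notin># rest" using restge cp by fastforce
          have Sx: "(SB - {1}) \<union> (SK - {c}) \<union> (if c \<in> SK then {p} else {}) = S"
            using Sdecomp W1' SB_def SK_def cnot by auto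
          have "1 \<notin> SB" using W1' SB_def by auto
          then show ?thesis using cB fB MinK rpos cr M \<open>\<not>t\<close> K_def
            by (simp add: dec_def) (use Sx in \<open>auto split: if_splits\<close>)
        qed
        then show ?thesis using inD by blast
      qed
    qed
  qed
qed

lemma finite_Dom: "finite (Dom m b)"
  by (auto simp: Dom_def finite_overpartitions finite_Hs)

lemma card_Dom: "card (Dom m b) = overpartition_count b * (card (Hs m) + card (Hs (m-1)))"
proof -
  have "card (Hs m \<times> {False} \<union> Hs (m-1) \<times> {True}) = card (Hs m) + card (Hs (m-1))"
    by (subst card_Un_disjoint) (auto simp: finite_Hs card_cartesian_product)
  then show ?thesis
    by (simp add: Dom_def card_cartesian_product overpartition_count_def)
qed

lemma card_Tgt: "card (Tgt m b) = card (Hs (m+b)) + card (Hs (m+b-1))"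
  by (simp add: Tgt_def card_Un_disjoint finite_Hs card_cartesian_product)
     (subst card_Un_disjoint, auto simp: finite_Hs card_cartesian_product)

lemma Tgt_sub:
  assumes "m \<ge> 1" shows "Tgt m b \<subseteq> dec ` Dom m b"
proof
  fix y assume y: "y \<in> Tgt m b"
  obtain L S t where yy: "y = ((L,S),t)" by (metis prod.exhaust)
  have "(L,S) \<in> Hs (if t then m+b-1 else m+b)" using y yy by (cases t) (auto simp: Tgt_def)
  then obtain x where "x \<in> Dom m b" "dec x = ((L,S),t)"
    using preimage_exists[OF assms, of L S "if t then m+b-1 else m+b" t b] by blast
  then show "y \<in> dec ` Dom m b" using yy by force
qed

lemma lemmaB:
  assumes "m \<ge> 1"
  shows "card (Hs (m+b)) + card (Hs (m+b-1)) \<le> overpartition_count b * (card (Hs m) + card (Hs (m-1)))"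
proof -
  have "card (Tgt m b) \<le> card (dec ` Dom m b)"
    by (rule card_mono[OF finite_imageI[OF finite_Dom] Tgt_sub[OF assms]])
  also have "\<dots> \<le> card (Dom m b)" by (rule card_image_le[OF finite_Dom])
  finally show ?thesis by (simp add: card_Tgt card_Dom)
qed

lemma lemmaB_strict:
  assumes "b \<ge> 2"
  shows "card (Hs (2+b)) + card (Hs (2+b-1)) < overpartition_count b * (card (Hs 2) + card (Hs (2-1)))"
proof -
  have ni: "\<not> inj_on dec (Dom 2 b)"
  proof (cases "b = 2")
    case True
    let ?x1 = "(({#2::nat#},{2::nat}), (({#2::nat#},{2::nat}),False))"
    let ?x2 = "(({#2::nat#},{2::nat}), (({#2::nat#},{}::nat set),False))"
    have "?x1 \<in> Dom 2 b" "?x2 \<in> Dom 2 b" using True by (auto simp: Dom_def O_mem Hs_mem)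
    moreover have "dec ?x1 = dec ?x2" by (simp add: dec_def)
    moreover have "?x1 \<noteq> ?x2" by simp
    ultimately show ?thesis unfolding inj_on_def by blast
  next
    case False
    then have b3: "b \<ge> 3" using assms by simp
    let ?x1 = "(({#b#},{}::nat set), (({#2::nat#},{}::nat set),False))"
    let ?x2 = "((add_mset 2 (replicate_mset (b-2) 1),{}::nat set), (({#2::nat#},{}::nat set),False))"
    have "?x1 \<in> Dom 2 b" using b3 by (auto simp: Dom_def O_mem Hs_mem)
    moreover have "?x2 \<in> Dom 2 b" using b3 by (auto simp: Dom_def O_mem Hs_mem sum_mset_replicate_mset)
    moreover have "dec ?x1 = dec ?x2"
    proof -
      have f: "filter_mset (\<lambda>y. y \<noteq> 1) (add_mset 2 (replicate_mset (b-2) (1::nat))) = {#2#}"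
        by simp
      show ?thesis using b3 by (simp add: dec_def f add_mset_commute)
    qed
    moreover have "?x1 \<noteq> ?x2" using b3 by auto
    ultimately show ?thesis unfolding inj_on_def by blast
  qed
  have sub: "Tgt 2 b \<subseteq> dec ` Dom 2 b" by (rule Tgt_sub) simp
  have "card (Tgt 2 b) \<le> card (dec ` Dom 2 b)"
    by (rule card_mono[OF finite_imageI[OF finite_Dom] sub])
  also have "\<dots> < card (Dom 2 b)"
    using ni card_image_le[OF finite_Dom[of 2 b], of dec] inj_on_iff_eq_card[OF finite_Dom[of 2 b], of dec]
    by linarith
  finally show ?thesis by (simp add: card_Tgt card_Dom)
qed

definition Dn :: "nat \<Rightarrow> nat" where "Dn n = card (Hs n) + card (Hs (n-1))"

lemma count_0: "overpartition_count 0 = 1"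
  by (simp add: overpartition_count_def overpartitions_0)

lemma telescope: "overpartition_count (b + a) = overpartition_count b + (\<Sum>j\<in>{1..a}. Dn (b+j))"
proof (induction a)
  case 0 then show ?case by simp
next
  case (Suc a)
  have "overpartition_count (b + Suc a) = overpartition_count (b + a) + card (Hs (b + Suc a)) + card (Hs (b + a))"
    using lemmaA[of "b + Suc a"] by simp
  also have "\<dots> = overpartition_count b + (\<Sum>j\<in>{1..a}. Dn (b+j)) + Dn (b + Suc a)"
    using Suc by (simp add: Dn_def)
  also have "\<dots> = overpartition_count b + (\<Sum>j\<in>{1..Suc a}. Dn (b+j))"
    by simp
  finally show ?case .
qed

theorem theorem1p1:
  fixes a b :: nat
  assumes "a > 1" and "b > 1"
  shows "overpartition_count a * overpartition_count b > overpartition_count (a + b)"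
proof -
  have fa: "overpartition_count a = 1 + (\<Sum>j\<in>{1..a}. Dn j)"
    using telescope[of 0 a] count_0 by simp
  have le: "\<forall>j\<in>{1..a}. Dn (b+j) \<le> overpartition_count b * Dn j"
  proof
    fix j assume "j \<in> {1..a}"
    then have "j \<ge> 1" by simp
    from lemmaB[OF this, of b] show "Dn (b+j) \<le> overpartition_count b * Dn j"
      by (simp add: Dn_def add.commute)
  qed
  have lt: "\<exists>j\<in>{1..a}. Dn (b+j) < overpartition_count b * Dn j"
  proof
    show "2 \<in> {1..a}" using assms by simp
    from lemmaB_strict[of b] assms show "Dn (b+2) < overpartition_count b * Dn 2"
      by (simp add: Dn_def add.commute)
  qed
  have "(\<Sum>j\<in>{1..a}. Dn (b+j)) < (\<Sum>j\<in>{1..a}. overpartition_count b * Dn j)"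
    by (rule sum_strict_mono_ex1[OF _ le lt]) simp
  then have "overpartition_count (b + a) < overpartition_count b + overpartition_count b * (\<Sum>j\<in>{1..a}. Dn j)"
    using telescope[of b a] by (simp add: sum_distrib_left)
  also have "\<dots> = overpartition_count a * overpartition_count b"
    using fa by (simp add: algebra_simps)
  finally show ?thesis by (simp add: add.commute)
qed

end
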